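(* Let $(Q(M))_{M\in\mathcal N}$ be a family of matrices satisfying (A1)–(A3), and let $p$ be a stochastic choice function such that $p(\cdot,\{i,j\})\bigl(I-Q(\{i,j\})\bigr)=0$ for all distinct $i,j\in X$. Fix $M\in\mathcal N$ and let $G(M)=\{(i,j)\in M\times M:\delta_{ij}(M)>0\}$ (for $(i,j)\in G(M)$ necessarily $p(j,\{i,j\})>0$). Let $D(M)$ be the $|M|\times|G(M)|$ matrix with rows indexed by $m\in M$ and columns by $(i,j)\in G(M)$, with entries $D_{m,(i,j)}=\delta_{ij}(M)/p(j,\{i,j\})$ if $m=i$, $D_{m,(i,j)}=-\delta_{ij}(M)/p(j,\{i,j\})$ if $m=j$, and $0$ otherwise, and let $\gamma(M)$ be the column vector with entries $\gamma_{(i,j)}(M)=q_{ij}(M)$, $(i,j)\in G(M)$. Then $p(\cdot,M)(I-Q(M))=0$ if and only if $D(M)\gamma(M)=0$, i.e. if and only if for every $j\in M$ $$\sum_{i:(j,i)\in G(M)}\frac{\delta_{ji}(M)\,q_{ji}(M)}{p(i,\{i,j\})}-\sum_{i:(i,j)\in G(M)}\frac{\delta_{ij}(M)\,q_{ij}(M)}{p(j,\{i,j\})}=0.$$ (If $G(M)=\emptyset$ the condition is vacuous and $p(\cdot,M)(I-Q(M))=0$ holds.)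
   Context: $X$ is a finite set of alternatives; a menu is a nonempty subset of $X$, and $\mathcal N$ denotes the set of all menus. A stochastic choice function is a map $p:X\times\mathcal N\to[0,1]$ with $\sum_{i\in M}p(i,M)=1$ and $p(i,M)=0$ for $i\notin M$; $p(\cdot,M)$ denotes the row vector $(p(i,M))_{i\in M}$. For $M\in\mathcal N$ and $i,j\in M$ let $\delta_{ij}(M)=p(i,M)\,p(j,\{i,j\})-p(i,\{i,j\})\,p(j,M)$. The family $Q(M)=(q_{ij}(M))_{i,j\in M}$, $M\in\mathcal N$, has nonnegative entries and satisfies for all $M\in\mathcal N$ and distinct $i,j\in M$: (A1) $q_{ii}(M)=1-\sum_{k\neq i}q_{ik}(M)>0$; (A2) if $q_{ij}(\{i,j\})=0$ then $q_{ji}(\{i,j\})>0$; (A3) $q_{ij}(\{i,j\})\,q_{ji}(M)=q_{ji}(\{i,j\})\,q_{ij}(M)$. *)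

theory Defs
  imports Complex_Main
begin

text \<open>The matrix family is
  Q :: 'a set => 'a => 'a => real, with Q M i j = q_ij(M).\<close>

definition menu :: "'a set \<Rightarrow> 'a set \<Rightarrow> bool" where
  "menu X M \<longleftrightarrow> M \<noteq> {} \<and> M \<subseteq> X"

definition stochastic_choice :: "'a set \<Rightarrow> ('a \<Rightarrow> 'a set \<Rightarrow> real) \<Rightarrow> bool" where
  "stochastic_choice X p \<longleftrightarrow>
     (\<forall>M. menu X M \<longrightarrow>
        (\<forall>i. 0 \<le> p i M \<and> p i M \<le> 1) \<and>
        (\<Sum>i\<in>M. p i M) = 1 \<and>
        (\<forall>i. i \<notin> M \<longrightarrow> p i M = 0))"

text \<open>Assumptions (A1)-(A3) on the family Q, together with nonnegativity of entries.\<close>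
definition Q_family :: "'a set \<Rightarrow> ('a set \<Rightarrow> 'a \<Rightarrow> 'a \<Rightarrow> real) \<Rightarrow> bool" where
  "Q_family X Q \<longleftrightarrow>
     (\<forall>M. menu X M \<longrightarrow>
        (\<forall>i\<in>M. \<forall>j\<in>M. 0 \<le> Q M i j) \<and>
        (\<forall>i\<in>M. Q M i i = 1 - (\<Sum>k\<in>M - {i}. Q M i k) \<and> Q M i i > 0) \<and>
        (\<forall>i\<in>M. \<forall>j\<in>M. i \<noteq> j \<longrightarrow>
            (Q {i,j} i j = 0 \<longrightarrow> Q {i,j} j i > 0) \<and>
            Q {i,j} i j * Q M j i = Q {i,j} j i * Q M i j))"

definition stationary :: "('a \<Rightarrow> 'a set \<Rightarrow> real) \<Rightarrow> ('a set \<Rightarrow> 'a \<Rightarrow> 'a \<Rightarrow> real) \<Rightarrow> 'a set \<Rightarrow> bool" where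
  "stationary p Q M \<longleftrightarrow>
     (\<forall>k\<in>M. (\<Sum>m\<in>M. p m M * ((if m = k then 1 else 0) - Q M m k)) = 0)"

definition delta :: "('a \<Rightarrow> 'a set \<Rightarrow> real) \<Rightarrow> 'a set \<Rightarrow> 'a \<Rightarrow> 'a \<Rightarrow> real" where
  "delta p M i j = p i M * p j {i,j} - p i {i,j} * p j M"

definition Gset :: "('a \<Rightarrow> 'a set \<Rightarrow> real) \<Rightarrow> 'a set \<Rightarrow> ('a \<times> 'a) set" where
  "Gset p M = {(i,j) \<in> M \<times> M. delta p M i j > 0}"

definition Dmat :: "('a \<Rightarrow> 'a set \<Rightarrow> real) \<Rightarrow> 'a set \<Rightarrow> 'a \<Rightarrow> 'a \<times> 'a \<Rightarrow> real" where
  "Dmat p M m g = (case g of (i,j) \<Rightarrow>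
      if m = i then delta p M i j / p j {i,j}
      else if m = j then - (delta p M i j / p j {i,j})
      else 0)"

definition gamma :: "('a set \<Rightarrow> 'a \<Rightarrow> 'a \<Rightarrow> real) \<Rightarrow> 'a set \<Rightarrow> 'a \<times> 'a \<Rightarrow> real" where
  "gamma Q M g = (case g of (i,j) \<Rightarrow> Q M i j)"

end

theory Submission
  imports Defs
begin

definition flow :: "('a \<Rightarrow> 'a set \<Rightarrow> real) \<Rightarrow> ('a set \<Rightarrow> 'a \<Rightarrow> 'a \<Rightarrow> real) \<Rightarrow> 'a set \<Rightarrow> 'a \<Rightarrow> 'a \<Rightarrow> real" where
  "flow p Q M i j = p i M * Q M i j - p j M * Q M j i"

lemma basic_facts:
  assumes QF: "Q_family X Q" and SC: "stochastic_choice X p"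
    and ST: "\<And>i j. i \<in> X \<Longrightarrow> j \<in> X \<Longrightarrow> i \<noteq> j \<Longrightarrow> stationary p Q {i,j}"
    and MM: "menu X M" and i: "i \<in> M" and j: "j \<in> M" and ij: "i \<noteq> j"
  shows "p i {i,j} + p j {i,j} = 1" "p i {i,j} \<ge> 0" "p j {i,j} \<ge> 0"
    "p i {i,j} * Q {i,j} i j = p j {i,j} * Q {i,j} j i"
    "Q {i,j} i j = 0 \<longrightarrow> Q {i,j} j i > 0"
    "Q {i,j} i j * Q M j i = Q {i,j} j i * Q M i j"
    "Q {i,j} i j \<ge> 0" "Q {i,j} j i \<ge> 0" "p i M \<ge> 0" "p j M \<ge> 0"
proof -
  have MX: "M \<subseteq> X" using MM by (simp add: menu_def)
  have m2: "menu X {i,j}" using MX i j by (auto simp: menu_def)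
  have sc2: "(\<Sum>k\<in>{i,j}. p k {i,j}) = 1" "\<forall>k. 0 \<le> p k {i,j}"
    using SC m2 unfolding stochastic_choice_def by blast+
  show "p i {i,j} + p j {i,j} = 1" using sc2(1) ij by simp
  show "p i {i,j} \<ge> 0" "p j {i,j} \<ge> 0" using sc2(2) by auto
  show "p i M \<ge> 0" "p j M \<ge> 0" using SC MM unfolding stochastic_choice_def by auto
  have qM: "(Q {i,j} i j = 0 \<longrightarrow> Q {i,j} j i > 0) \<and>
            Q {i,j} i j * Q M j i = Q {i,j} j i * Q M i j"
    using QF MM i j ij unfolding Q_family_def by blast
  then show "Q {i,j} i j = 0 \<longrightarrow> Q {i,j} j i > 0"
    "Q {i,j} i j * Q M j i = Q {i,j} j i * Q M i j" by auto
  have q2: "(\<forall>a\<in>{i,j}. \<forall>b\<in>{i,j}. 0 \<le> Q {i,j} a b)"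
    "Q {i,j} i i = 1 - (\<Sum>k\<in>{i,j} - {i}. Q {i,j} i k)"
    using QF m2 unfolding Q_family_def by blast+
  show "Q {i,j} i j \<ge> 0" "Q {i,j} j i \<ge> 0" using q2(1) by auto
  have qii: "Q {i,j} i i = 1 - Q {i,j} i j" using q2(2) ij
    by (simp add: insert_Diff_if)
  have "stationary p Q {i,j}" using ST MX i j ij by auto
  then have "(\<Sum>m\<in>{i,j}. p m {i,j} * ((if m = i then 1 else 0) - Q {i,j} m i)) = 0"
    unfolding stationary_def by blast
  then have "p i {i,j} * (1 - Q {i,j} i i) + p j {i,j} * (0 - Q {i,j} j i) = 0"
    using ij by simp
  then show "p i {i,j} * Q {i,j} i j = p j {i,j} * Q {i,j} j i" using qii by simp
qed


lemma delta_self: "delta p M i i = 0" by (simp add: delta_def)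

lemma delta_swap: "delta p M j i = - delta p M i j"
  by (simp add: delta_def insert_commute)

lemma flow_pos:
  assumes QF: "Q_family X Q" and SC: "stochastic_choice X p"
    and ST: "\<And>i j. i \<in> X \<Longrightarrow> j \<in> X \<Longrightarrow> i \<noteq> j \<Longrightarrow> stationary p Q {i,j}"
    and MM: "menu X M" and i: "i \<in> M" and j: "j \<in> M" and ij: "i \<noteq> j"
    and b: "p j {i,j} > 0"
  shows "flow p Q M i j = delta p M i j * Q M i j / p j {i,j}"
proof -
  note F = basic_facts[OF QF SC ST MM i j ij]
  have x: "Q {i,j} i j > 0"
  proof (rule ccontr)
    assume "\<not> Q {i,j} i j > 0"
    then have "Q {i,j} i j = 0" using F(7) by auto
    then have "Q {i,j} j i > 0" "p j {i,j} * Q {i,j} j i = 0" using F(5) F(4) by auto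
    then show False using b by simp
  qed
  have "Q {i,j} i j * (p j {i,j} * Q M j i) = Q {i,j} i j * (p i {i,j} * Q M i j)"
  proof -
    have "Q {i,j} i j * (p j {i,j} * Q M j i) = p j {i,j} * (Q {i,j} i j * Q M j i)" by simp
    also have "\<dots> = p j {i,j} * Q {i,j} j i * Q M i j" using F(6) by simp
    also have "\<dots> = p i {i,j} * Q {i,j} i j * Q M i j" using F(4) by simp
    finally show ?thesis by simp
  qed
  then have e: "p j {i,j} * Q M j i = p i {i,j} * Q M i j" using x by simp
  show ?thesis using b e unfolding flow_def delta_def
    by (simp add: field_simps)
qed

lemma flow_zero:
  assumes QF: "Q_family X Q" and SC: "stochastic_choice X p"
    and ST: "\<And>i j. i \<in> X \<Longrightarrow> j \<in> X \<Longrightarrow> i \<noteq> j \<Longrightarrow> stationary p Q {i,j}"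
    and MM: "menu X M" and i: "i \<in> M" and j: "j \<in> M" and ij: "i \<noteq> j"
    and b: "p j {i,j} = 0" and d: "delta p M i j = 0"
  shows "flow p Q M i j = 0"
proof -
  note F = basic_facts[OF QF SC ST MM i j ij]
  have a: "p i {i,j} = 1" using F(1) b by simp
  have Pj: "p j M = 0" using d a b by (simp add: delta_def)
  have "Q {i,j} i j = 0" using F(4) a b by simp
  then have "Q {i,j} j i > 0" "Q {i,j} j i * Q M i j = 0" using F(5) F(6) by auto
  then have "Q M i j = 0" by simp
  then show ?thesis using Pj by (simp add: flow_def)
qed

lemma flow_formula:
  assumes QF: "Q_family X Q" and SC: "stochastic_choice X p"
    and ST: "\<And>i j. i \<in> X \<Longrightarrow> j \<in> X \<Longrightarrow> i \<noteq> j \<Longrightarrow> stationary p Q {i,j}"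
    and MM: "menu X M" and i: "i \<in> M" and j: "j \<in> M"
  shows "flow p Q M i j =
     (if delta p M i j > 0 then delta p M i j * Q M i j / p j {i,j} else 0)
   - (if delta p M j i > 0 then delta p M j i * Q M j i / p i {j,i} else 0)"
proof (cases "i = j")
  case True then show ?thesis by (simp add: flow_def delta_self)
next
  case ij: False
  note F = basic_facts[OF QF SC ST MM i j ij]
  note G = basic_facts[OF QF SC ST MM j i] 
  have G1: "p i {j,i} \<ge> 0" using G ij by auto
  have fs: "flow p Q M j i = - flow p Q M i j" by (simp add: flow_def)
  consider "delta p M i j > 0" | "delta p M j i > 0" | "delta p M i j = 0"
    using delta_swap[of p M j i] by linarith
  then show ?thesis
  proof cases
    case 1
    have "p j {i,j} > 0"
    proof (rule ccontr)
      assume "\<not> p j {i,j} > 0"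
      then have "p j {i,j} = 0" using F(3) by auto
      then show False using 1 F(2) F(10) by (simp add: delta_def) (metis mult_nonneg_nonneg not_less)
    qed
    then show ?thesis using 1 flow_pos[OF QF SC ST MM i j ij] delta_swap[of p M j i] by auto
  next
    case 2
    have "p i {j,i} > 0"
    proof (rule ccontr)
      assume "\<not> p i {j,i} > 0"
      then have "p i {j,i} = 0" using G1 by auto
      then show False using 2 G F(9) ij by (simp add: delta_def mult_nonneg_nonneg)
    qed
    then show ?thesis using 2 flow_pos[OF QF SC ST MM j i] ij fs delta_swap[of p M j i] by auto
  next
    case 3
    have "flow p Q M i j = 0"
    proof (cases "p j {i,j} > 0")
      case True then show ?thesis using 3 flow_pos[OF QF SC ST MM i j ij] by simp
    next
      case False then have "p j {i,j} = 0" using F(3) by auto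
      then show ?thesis using flow_zero[OF QF SC ST MM i j ij] 3 by simp
    qed
    then show ?thesis using 3 delta_swap[of p M j i] by simp
  qed
qed


lemma stat_sum:
  assumes QF: "Q_family X Q" and MM: "menu X M" and fin: "finite M" and k: "k \<in> M"
  shows "(\<Sum>m\<in>M. p m M * ((if m = k then 1 else 0) - Q M m k)) = (\<Sum>j\<in>M. flow p Q M k j)"
proof -
  have q: "Q M k k = 1 - (\<Sum>j\<in>M - {k}. Q M k j)" using QF MM k unfolding Q_family_def by blast
  have s1: "(\<Sum>j\<in>M. Q M k j) = 1" using q fin k by (simp add: sum.remove)
  have "(\<Sum>m\<in>M. p m M * ((if m = k then 1 else 0) - Q M m k))
      = (\<Sum>m\<in>M. (if m = k then p m M else 0)) - (\<Sum>m\<in>M. p m M * Q M m k)"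
    by (simp add: sum_subtractf[symmetric]) (intro sum.cong refl, simp add: algebra_simps)
  also have "\<dots> = p k M - (\<Sum>m\<in>M. p m M * Q M m k)" using fin k by simp
  also have "\<dots> = p k M * (\<Sum>j\<in>M. Q M k j) - (\<Sum>m\<in>M. p m M * Q M m k)" using s1 by simp
  also have "\<dots> = (\<Sum>j\<in>M. flow p Q M k j)"
    by (simp add: flow_def sum_subtractf sum_distrib_left)
  finally show ?thesis .
qed

theorem lemmaA4:
  fixes X :: "'a set" and p :: "'a \<Rightarrow> 'a set \<Rightarrow> real"
    and Q :: "'a set \<Rightarrow> 'a \<Rightarrow> 'a \<Rightarrow> real" and M :: "'a set"
  assumes "finite X"
    and "Q_family X Q"
    and "stochastic_choice X p"
    and "\<And>i j. i \<in> X \<Longrightarrow> j \<in> X \<Longrightarrow> i \<noteq> j \<Longrightarrow> stationary p Q {i,j}"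
    and "menu X M"
  shows "(stationary p Q M \<longleftrightarrow>
            (\<forall>m\<in>M. (\<Sum>g\<in>Gset p M. Dmat p M m g * gamma Q M g) = 0))
       \<and> (stationary p Q M \<longleftrightarrow>
            (\<forall>j\<in>M. (\<Sum>i\<in>{i. (j,i) \<in> Gset p M}. delta p M j i * Q M j i / p i {i,j})
                   - (\<Sum>i\<in>{i. (i,j) \<in> Gset p M}. delta p M i j * Q M i j / p j {i,j}) = 0))"
proof -
  note QF = assms(2) and SC = assms(3) and ST = assms(4) and MM = assms(5)
  have fin: "finite M" using assms(1) MM finite_subset unfolding menu_def by blast
  define c where "c i j = delta p M i j * Q M i j / p j {i,j}" for i j
  define S1 where "S1 k = (\<Sum>j\<in>M. if delta p M k j > 0 then c k j else 0)" for k
  define S2 where "S2 k = (\<Sum>i\<in>M. if delta p M i k > 0 then c i k else 0)" for k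
  have flowsum: "(\<Sum>j\<in>M. flow p Q M k j) = S1 k - S2 k" if k: "k \<in> M" for k
  proof -
    have "(\<Sum>j\<in>M. flow p Q M k j) = (\<Sum>j\<in>M. (if delta p M k j > 0 then c k j else 0)
          - (if delta p M j k > 0 then c j k else 0))"
      by (rule sum.cong[OF refl]) (simp add: flow_formula[OF QF SC ST MM k] c_def)
    then show ?thesis by (simp add: S1_def S2_def sum_subtractf)
  qed
  have stat: "stationary p Q M \<longleftrightarrow> (\<forall>k\<in>M. S1 k - S2 k = 0)"
    unfolding stationary_def using stat_sum[OF QF MM fin] flowsum by simp
  have part2: "(\<Sum>i\<in>{i. (j,i) \<in> Gset p M}. delta p M j i * Q M j i / p i {i,j})
                   - (\<Sum>i\<in>{i. (i,j) \<in> Gset p M}. delta p M i j * Q M i j / p j {i,j})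
        = S1 j - S2 j" if j: "j \<in> M" for j
  proof -
    have e1: "{i. (j,i) \<in> Gset p M} = {i\<in>M. delta p M j i > 0}" using j by (auto simp: Gset_def)
    have e2: "{i. (i,j) \<in> Gset p M} = {i\<in>M. delta p M i j > 0}" using j by (auto simp: Gset_def)
    show ?thesis unfolding e1 e2 S1_def S2_def c_def
      by (simp add: sum.inter_filter[OF fin], intro sum.cong refl, simp add: insert_commute)
  qed
  have part1: "(\<Sum>g\<in>Gset p M. Dmat p M m g * gamma Q M g) = S1 m - S2 m" if m: "m \<in> M" for m
  proof -
    have G: "Gset p M = {g \<in> M \<times> M. delta p M (fst g) (snd g) > 0}" by (auto simp: Gset_def)
    have "(\<Sum>g\<in>Gset p M. Dmat p M m g * gamma Q M g)
        = (\<Sum>g\<in>M \<times> M. if delta p M (fst g) (snd g) > 0 then Dmat p M m g * gamma Q M g else 0)"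
      unfolding G using fin by (simp add: sum.inter_filter)
    also have "\<dots> = (\<Sum>i\<in>M. \<Sum>j\<in>M. if delta p M i j > 0 then Dmat p M m (i,j) * gamma Q M (i,j) else 0)"
      unfolding sum.cartesian_product by (intro sum.cong refl) auto
    also have "\<dots> = (\<Sum>i\<in>M. \<Sum>j\<in>M. (if i = m \<and> delta p M i j > 0 then c i j else 0)
                     - (if j = m \<and> delta p M i j > 0 then c i j else 0))"
      by (intro sum.cong refl) (auto simp: Dmat_def gamma_def c_def delta_self)
    also have "\<dots> = (\<Sum>i\<in>M. \<Sum>j\<in>M. if i = m \<and> delta p M i j > 0 then c i j else 0)
                  - (\<Sum>i\<in>M. \<Sum>j\<in>M. if j = m \<and> delta p M i j > 0 then c i j else 0)"
      by (simp add: sum_subtractf)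
    also have "\<dots> = S1 m - S2 m"
    proof -
      have a: "(\<Sum>i\<in>M. \<Sum>j\<in>M. if i = m \<and> delta p M i j > 0 then c i j else 0) = S1 m"
      proof -
        have "(\<Sum>i\<in>M. \<Sum>j\<in>M. if i = m \<and> delta p M i j > 0 then c i j else 0)
          = (\<Sum>i\<in>M. if i = m then (\<Sum>j\<in>M. if delta p M i j > 0 then c i j else 0) else 0)"
          by (intro sum.cong refl) auto
        then show ?thesis unfolding S1_def using fin m by simp
      qed
      have b: "(\<Sum>i\<in>M. \<Sum>j\<in>M. if j = m \<and> delta p M i j > 0 then c i j else 0) = S2 m"
        unfolding S2_def using fin m
      proof (intro sum.cong refl)
        fix i assume "i \<in> M"
        have "(\<Sum>j\<in>M. if j = m \<and> delta p M i j > 0 then c i j else 0)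
          = (\<Sum>j\<in>M. if j = m then (if delta p M i j > 0 then c i j else 0) else 0)"
          by (intro sum.cong refl) auto
        then show "(\<Sum>j\<in>M. if j = m \<and> delta p M i j > 0 then c i j else 0)
            = (if delta p M i m > 0 then c i m else 0)" using fin m by simp
      qed
      show ?thesis using a b by simp
    qed
    finally show ?thesis .
  qed
  show ?thesis using stat part1 part2 by simp
qed

end
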